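(* Let $n\ge3$ and $q=\frac{2n}{n-2}$. Let $u_0>0$. There exists a solution $U$ on $[0,\infty)$ of $$-U''=U^{-q-1}-U^{q-1}$$ satisfying $U(0)=u_0$ and $\lim_{x\to\infty}U(x)=1$, with $U$ converging rapidly to $1$ at infinity. Moreover $U$ satisfies $$U'=\sqrt{\tfrac{2}{q}}\left[U^{-q/2}-U^{q/2}\right],$$ and $U'(x)\to0$ rapidly as $x\to\infty$.
   Context: A function $f$ converges rapidly to $L$ at infinity if $\lim_{x\to\infty}|f(x)-L|\,x^m=0$ for every $m\in\mathbb{R}$. *)

theory Defs
  imports "HOL-Analysis.Analysis"
begin

definition converges_rapidly :: "(real \<Rightarrow> real) \<Rightarrow> real \<Rightarrow> bool" where
  "converges_rapidly f L \<longleftrightarrow> (\<forall>m::real. ((\<lambda>x. \<bar>f x - L\<bar> * x powr m) \<longlongrightarrow> 0) at_top)"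

end

theory Submission
  imports Defs "HOL-Real_Asymp.Real_Asymp"
begin

lemma core:
  fixes h :: "real \<Rightarrow> real" and y0 M a b :: real
  assumes y0: "0 < y0" "y0 < M"
    and hc: "continuous_on {0<..<M} h"
    and hpos: "\<And>y. 0 < y \<Longrightarrow> y < M \<Longrightarrow> h y > 0"
    and a: "a > 0"
    and bnd: "\<And>y. 0 < y \<Longrightarrow> y \<le> y0 \<Longrightarrow> a*y \<le> h y \<and> h y \<le> b*y"
  shows "\<exists>Y. Y 0 = y0 \<and> (\<forall>x\<ge>0. 0 < Y x \<and> Y x \<le> y0 \<and> (Y has_real_derivative - h (Y x)) (at x)
            \<and> Y x \<le> y0 * exp (-a*x))"
proof -
  have b: "b > 0" using bnd[OF y0(1) order.refl] a y0 by (smt (verit) mult_le_cancel_right)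
  define m where "m = (y0+M)/2"
  have m: "y0 < m" "m < M" using y0 by (auto simp: m_def)
  define k where "k = (\<lambda>y. 1 / h y)"
  have kc: "continuous_on {0<..<M} k"
    unfolding k_def using hc hpos by (auto intro!: continuous_intros) fastforce
  define F where "F = (\<lambda>y. integral {y..m} k - integral {y0..m} k)"
  have Fd: "(F has_real_derivative - k y) (at y)" if "0 < y" "y < m" for y
  proof -
    have c: "continuous_on {y/2..m} k"
      by (rule continuous_on_subset[OF kc]) (use that m in auto)
    have "((\<lambda>x. integral {x..m} k) has_real_derivative - k y) (at y within {y/2..m})"
      by (rule integral_has_real_derivative'[OF c]) (use that in auto)
    moreover have "at y within {y/2..m} = at y"
      by (rule at_within_interior) (use that in auto)
    ultimately have "((\<lambda>x. integral {x..m} k) has_real_derivative - k y) (at y)" by simp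
    then show ?thesis unfolding F_def by (auto intro!: derivative_eq_intros)
  qed
  have kpos: "k y > 0" if "0 < y" "y < m" for y
    using hpos[of y] that m by (auto simp: k_def)
  have Fc: "isCont F y" if "0 < y" "y < m" for y
    using Fd[OF that] DERIV_isCont by blast
  have F0: "F y0 = 0" by (simp add: F_def)
  have Fmono: "F z < F y" if "0 < y" "y < z" "z < m" for y z
    by (rule DERIV_neg_imp_decreasing[OF that(2)])
       (use that kpos in \<open>auto intro!: exI[of _ "- k _"] Fd\<close>)
  have Flow: "F y \<ge> (ln y0 - ln y)/b" if "0 < y" "y \<le> y0" for y
  proof -
    have "F y + ln y / b \<ge> F y0 + ln y0 / b"
    proof (rule DERIV_nonpos_imp_nonincreasing[OF that(2)])
      fix t assume t: "y \<le> t" "t \<le> y0"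
      have d: "((\<lambda>t. F t + ln t / b) has_real_derivative (- k t + 1/t / b)) (at t)"
        using t that m b by (auto intro!: derivative_eq_intros Fd)
      have "h t \<le> b * t" using bnd[of t] t that by auto
      moreover have "h t > 0" using hpos[of t] t that m by auto
      ultimately have "1/t/b \<le> k t" using t that b
        by (auto simp: k_def field_simps)
      then show "\<exists>y. ((\<lambda>t. F t + ln t / b) has_real_derivative y) (at t) \<and> y \<le> 0"
        using d by (intro exI[of _ "- k t + 1/t / b"]) auto
    qed
    then show ?thesis using F0 b by (simp add: field_simps)
  qed
  define e where "e = (y0 + m)/2"
  have e: "y0 < e" "e < m" using m by (auto simp: e_def)
  have Fm: "F e < 0" using Fmono[of y0 e] F0 e y0 by auto
  have surj: "\<exists>y. 0 < y \<and> y < e \<and> F y = x" if x: "F e < x" for x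
  proof (cases "x \<le> 0")
    case True
    have "\<exists>y. y0 \<le> y \<and> y \<le> e \<and> F y = x"
      by (rule IVT2) (use True x F0 e y0 Fc in \<open>auto intro!: Fc\<close>)
    then obtain y where "y0 \<le> y" "y \<le> e" "F y = x" by blast
    then show ?thesis using x y0 by (intro exI[of _ y]) (auto simp: le_less)
  next
    case False
    define z where "z = y0 * exp (-b*(x+1))"
    have z: "0 < z" "z \<le> y0" using y0 b False by (auto simp: z_def mult_le_cancel_left1)
    have "F z \<ge> (ln y0 - ln z)/b" by (rule Flow[OF z])
    also have "(ln y0 - ln z)/b = x + 1" using y0 b by (simp add: z_def ln_mult)
    finally have Fz: "F z \<ge> x + 1" .
    have "\<exists>y. z \<le> y \<and> y \<le> y0 \<and> F y = x"
      by (rule IVT2) (use False Fz F0 z e in \<open>auto intro!: Fc\<close>)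
    then obtain y where "z \<le> y" "y \<le> y0" "F y = x" by blast
    then show ?thesis using z e by (intro exI[of _ y]) (auto simp: le_less)
  qed
  define Y where "Y = (\<lambda>x. THE y. 0 < y \<and> y < e \<and> F y = x)"
  have uniq: "y = z" if "0 < y" "y < e" "0 < z" "z < e" "F y = F z" for y z
    using Fmono[of y z] Fmono[of z y] that e by (cases y z rule: linorder_cases) auto
  have Y: "0 < Y x \<and> Y x < e \<and> F (Y x) = x" if xF: "F e < x" for x
  proof -
    obtain y where y: "0 < y \<and> y < e \<and> F y = x" using surj[OF xF] by auto
    have "Y x = y" unfolding Y_def
      by (rule the_equality) (use y uniq in blast)+
    then show ?thesis using y by simp
  qed
  have YF: "Y (F y) = y" if "0 < y" "y < e" for y
    using Y[of "F y"] Fmono[of y e] that e uniq[of "Y (F y)" y] by auto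
  have Y0: "Y 0 = y0" using YF[of y0] F0 y0 e by simp
  have Yle: "Y x \<le> y0" if "x \<ge> 0" for x
  proof (rule ccontr)
    assume "\<not> Y x \<le> y0"
    then have "F (Y x) < F y0" using Fmono[of y0 "Y x"] Y[of x] that Fm y0 e by auto
    then show False using Y[of x] that Fm F0 by auto
  qed
  have Yd: "(Y has_real_derivative - h (Y x)) (at x)" if x: "F e < x" for x
  proof -
    have Yx: "0 < Y x" "Y x < e" "F (Y x) = x" using Y[OF x] by auto
    have Yxm: "Y x < m" "k (Y x) > 0" using Yx e kpos[of "Y x"] by auto
    have cont: "isCont Y (F (Y x))"
      by (rule isCont_inverse_function2[where a="Y x / 2" and x="Y x" and b="(Y x + e)/2" and f=F and g=Y])
         (use Yx e in \<open>auto intro!: YF Fc\<close>)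
    have "(Y has_real_derivative inverse (- k (Y x))) (at x)"
      by (rule DERIV_inverse_function[where f=F and a="F e" and b="x+1"])
         (use Yxm Yx kpos[of "Y x"] x cont Y in \<open>auto intro!: Fd\<close>)
    then show ?thesis using hpos[of "Y x"] Yx e m by (simp add: k_def)
  qed
  have Yexp: "Y x \<le> y0 * exp (-a*x)" if x: "x \<ge> 0" for x
  proof -
    have "exp (a*x) * Y x \<le> exp (a*0) * Y 0"
    proof (rule DERIV_nonpos_imp_nonincreasing[OF x])
      fix t assume t: "0 \<le> t" "t \<le> x"
      have tF: "F e < t" using t Fm by auto
      have d: "((\<lambda>t. exp (a*t) * Y t) has_real_derivative
                 (a * exp (a*t) * Y t + exp (a*t) * (- h (Y t)))) (at t)"
        by (auto intro!: derivative_eq_intros Yd[OF tF])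
      have "a * Y t \<le> h (Y t)" using bnd[of "Y t"] Y[OF tF] Yle[of t] t by auto
      then have "a * exp (a*t) * Y t + exp (a*t) * (- h (Y t)) \<le> 0"
        by (simp add: algebra_simps)
      then show "\<exists>y. ((\<lambda>t. exp (a*t) * Y t) has_real_derivative y) (at t) \<and> y \<le> 0"
        using d by blast
    qed
    then have "exp (a*x) * Y x \<le> y0" using Y0 by simp
    then show ?thesis by (simp add: exp_minus field_simps)
  qed
  show ?thesis
  proof (intro exI[of _ Y] conjI allI impI)
    show "Y 0 = y0" by (rule Y0)
    fix x :: real assume x: "0 \<le> x"
    have xF: "F e < x" using x Fm by auto
    show "0 < Y x" using Y[OF xF] by auto
    show "Y x \<le> y0" by (rule Yle[OF x])
    show "(Y has_real_derivative - h (Y x)) (at x)" by (rule Yd[OF xF])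
    show "Y x \<le> y0 * exp (-a*x)" by (rule Yexp[OF x])
  qed
qed

lemma powr_mvt:
  fixes s t q :: real
  assumes "0 < s" "s < t"
  obtains z where "s < z" "z < t" "t powr q - s powr q = (t - s) * (q * z powr (q - 1))"
proof -
  have "\<exists>z. s < z \<and> z < t \<and> t powr q - s powr q = (t - s) * (q * z powr (q - 1))"
    by (rule MVT2[OF assms(2)]) (use assms in \<open>auto intro!: has_real_derivative_powr\<close>)
  then show ?thesis using that by blast
qed

lemma boundA:
  fixes q c u0 y :: real
  assumes q: "q > 2" and c: "c > 0" and u0: "u0 > 1" and y: "0 < y" "y \<le> u0 - 1"
  shows "c*q/u0 powr (q/2) * y \<le> c*((1+y) powr (q/2) - (1+y) powr (-q/2))
       \<and> c*((1+y) powr (q/2) - (1+y) powr (-q/2)) \<le> c*q*u0 powr (q-1) * y"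
proof -
  obtain z where z: "1 < z" "z < 1+y" and mv: "(1+y) powr q - 1 powr q = ((1+y) - 1) * (q * z powr (q - 1))"
    using powr_mvt[of 1 "1+y" q] y by auto
  define v where "v = (1+y) powr (q/2)"
  have v0: "v > 0" using y by (simp add: v_def)
  have vv: "v * v = (1+y) powr q" unfolding v_def using y by (simp add: powr_add[symmetric])
  have vinv: "(1+y) powr (-q/2) = 1 / v" unfolding v_def using y by (simp add: powr_minus_divide[symmetric])
  have E: "(1+y) powr (q/2) - (1+y) powr (-q/2) = y * q * z powr (q-1) / v"
    using mv vv vinv v0 by (simp add: v_def[symmetric] field_simps)
  have z1: "z powr (q-1) \<ge> 1" using z q by (intro ge_one_powr_ge_zero) auto
  have z2: "z powr (q-1) \<le> u0 powr (q-1)" using z q y by (intro powr_mono2) auto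
  have v1: "v \<ge> 1" unfolding v_def using y q by (intro ge_one_powr_ge_zero) auto
  have v2: "v \<le> u0 powr (q/2)" unfolding v_def using y q by (intro powr_mono2) auto
  have L: "q / u0 powr (q/2) * y \<le> y * q * z powr (q-1) / v"
  proof -
    have "q / u0 powr (q/2) * y = y * q * 1 / u0 powr (q/2)" by simp
    also have "\<dots> \<le> y * q * z powr (q-1) / u0 powr (q/2)"
      using z1 y q by (intro divide_right_mono mult_left_mono) auto
    also have "\<dots> \<le> y * q * z powr (q-1) / v"
      using v0 v2 y q z1 by (intro divide_left_mono) auto
    finally show ?thesis .
  qed
  have R: "y * q * z powr (q-1) / v \<le> q * u0 powr (q-1) * y"
  proof -
    have "y * q * z powr (q-1) / v \<le> y * q * z powr (q-1)"
      using divide_left_mono[OF v1, of "y * q * z powr (q-1)"] v0 y q z1 by simp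
    also have "\<dots> \<le> q * u0 powr (q-1) * y"
      using z2 y q by (simp add: mult.commute mult.left_commute mult_left_mono)
    finally show ?thesis .
  qed
  show ?thesis unfolding E using mult_left_mono[OF L, of c] mult_left_mono[OF R, of c] c
    by (simp add: mult_ac)
qed

lemma boundB:
  fixes q c u0 y :: real
  assumes q: "q > 2" and c: "c > 0" and u0: "0 < u0" "u0 < 1" and y: "0 < y" "y \<le> 1 - u0"
  shows "c*q*u0 powr (q-1) * y \<le> c*((1-y) powr (-q/2) - (1-y) powr (q/2))
       \<and> c*((1-y) powr (-q/2) - (1-y) powr (q/2)) \<le> c*q/u0 powr (q/2) * y"
proof -
  have w: "0 < 1 - y" "u0 \<le> 1 - y" "1 - y < 1" using y u0 by auto
  obtain z where z: "1 - y < z" "z < 1" and mv: "1 powr q - (1-y) powr q = (1 - (1-y)) * (q * z powr (q - 1))"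
    using powr_mvt[of "1-y" 1 q] w by auto
  define v where "v = (1-y) powr (q/2)"
  have v0: "v > 0" using w by (simp add: v_def)
  have vv: "v * v = (1-y) powr q" unfolding v_def using w by (simp add: powr_add[symmetric])
  have vinv: "(1-y) powr (-q/2) = 1 / v" unfolding v_def using w by (simp add: powr_minus_divide[symmetric])
  have E: "(1-y) powr (-q/2) - (1-y) powr (q/2) = y * q * z powr (q-1) / v"
    using mv vv vinv v0 by (simp add: v_def[symmetric] field_simps)
  have z1: "z powr (q-1) \<le> 1" using powr_mono2[of "q-1" z 1] z w q by simp
  have z2: "z powr (q-1) \<ge> u0 powr (q-1)" using z q w u0 by (intro powr_mono2) auto
  have v1: "v \<le> 1" unfolding v_def using powr_mono2[of "q/2" "1-y" 1] w q by simp
  have v2: "v \<ge> u0 powr (q/2)" unfolding v_def using w q u0 by (intro powr_mono2) auto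
  have u0p: "u0 powr (q/2) > 0" "u0 powr (q-1) > 0" using u0 by auto
  have L: "q * u0 powr (q-1) * y \<le> y * q * z powr (q-1) / v"
  proof -
    have "q * u0 powr (q-1) * y \<le> y * q * z powr (q-1)"
      using z2 y q by (simp add: mult.commute mult.left_commute mult_left_mono)
    also have "\<dots> \<le> y * q * z powr (q-1) / v"
      using divide_left_mono[OF v1, of "y * q * z powr (q-1)"] v0 y q z by simp
    finally show ?thesis .
  qed
  have R: "y * q * z powr (q-1) / v \<le> q / u0 powr (q/2) * y"
  proof -
    have "y * q * z powr (q-1) / v \<le> y * q * 1 / v"
      using z1 y q v0 by (intro divide_right_mono mult_left_mono) auto
    also have "\<dots> \<le> y * q / u0 powr (q/2)"
      using divide_left_mono[OF v2, of "y * q"] v0 y q u0p by simp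
    finally show ?thesis by (simp add: mult.commute)
  qed
  show ?thesis unfolding E using mult_left_mono[OF L, of c] mult_left_mono[OF R, of c] c
    by (simp add: mult_ac)
qed

lemma rapid_of_exp:
  fixes f :: "real \<Rightarrow> real"
  assumes a: "a > 0" and bd: "\<And>x. x \<ge> 0 \<Longrightarrow> \<bar>f x - L\<bar> \<le> C * exp (-a*x)"
  shows "converges_rapidly f L"
  unfolding converges_rapidly_def
proof
  fix m :: real
  have lim: "((\<lambda>x. C * exp (-a*x) * x powr m) \<longlongrightarrow> 0) at_top"
    using a by real_asymp
  show "((\<lambda>x. \<bar>f x - L\<bar> * x powr m) \<longlongrightarrow> 0) at_top"
  proof (rule tendsto_sandwich[OF _ _ tendsto_const lim])
    show "\<forall>\<^sub>F x in at_top. 0 \<le> \<bar>f x - L\<bar> * x powr m" by auto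
    show "\<forall>\<^sub>F x in at_top. \<bar>f x - L\<bar> * x powr m \<le> C * exp (-a*x) * x powr m"
      using eventually_ge_at_top[of 0]
      by eventually_elim (use bd in \<open>auto intro!: mult_right_mono\<close>)
  qed
qed

lemma rapid_lim:
  assumes "converges_rapidly f L"
  shows "(f \<longlongrightarrow> L) at_top"
proof -
  have "((\<lambda>x. \<bar>f x - L\<bar> * x powr 0) \<longlongrightarrow> 0) at_top"
    using assms unfolding converges_rapidly_def by blast
  moreover have "\<forall>\<^sub>F x in at_top. \<bar>f x - L\<bar> * x powr 0 = \<bar>f x - L\<bar>"
    using eventually_gt_at_top[of 0] by eventually_elim auto
  ultimately have "((\<lambda>x. \<bar>f x - L\<bar>) \<longlongrightarrow> 0) at_top"
    by (rule Lim_transform_eventually)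
  then have "((\<lambda>x. f x - L) \<longlongrightarrow> 0) at_top"
    by (simp add: tendsto_rabs_zero_iff)
  then show ?thesis by (rule LIM_zero_cancel)
qed

lemma second:
  fixes q :: real and U :: "real \<Rightarrow> real"
  assumes q: "q > 0" and u: "U x > 0"
    and d: "(U has_real_derivative sqrt (2/q) * (U x powr (-q/2) - U x powr (q/2))) (at x)"
  shows "((\<lambda>x. sqrt (2/q) * (U x powr (-q/2) - U x powr (q/2))) has_real_derivative
           (U x powr (q - 1) - U x powr (-q - 1))) (at x)"
proof -
  define c where "c = sqrt (2/q)"
  define u where "u = U x"
  define D where "D = c * (U x powr (-q/2) - U x powr (q/2))"
  have dd: "((\<lambda>x. c * (U x powr (-q/2) - U x powr (q/2))) has_real_derivative
      c * ((-q/2) * U x powr (-q/2 - 1) * D - (q/2) * U x powr (q/2 - 1) * D)) (at x)"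
    using d u unfolding D_def c_def
    by (auto intro!: derivative_eq_intros DERIV_fun_powr[THEN DERIV_cong] simp: algebra_simps)
  define v where "v = u powr (q/2)"
  have v0: "v > 0" using u by (simp add: v_def u_def)
  have e1: "u powr (-q/2) = 1/v" unfolding v_def using u
    by (simp add: powr_minus_divide[symmetric])
  have e2: "u powr (-q/2 - 1) = 1 / (v * u)" unfolding v_def using u
    by (simp add: powr_diff powr_minus_divide u_def)
  have e3: "u powr (q/2 - 1) = v/u" unfolding v_def using u
    by (simp add: powr_diff u_def)
  have e4: "u powr (q - 1) = v * v / u" unfolding v_def using u
    by (simp add: powr_diff u_def powr_add[symmetric])
  have e5: "u powr (-q - 1) = 1 / (v * v * u)" unfolding v_def using u
    by (simp add: powr_diff u_def powr_add[symmetric] powr_minus_divide)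
  have cc: "c * c = 2/q" unfolding c_def using q by simp
  have key: "c * ((-q/2) * (1 / (v * u)) * (c * (1/v - v)) - (q/2) * (v/u) * (c * (1/v - v)))
        = v * v / u - 1 / (v * v * u)"
  proof -
    have "c * ((-q/2) * (1 / (v * u)) * (c * (1/v - v)) - (q/2) * (v/u) * (c * (1/v - v)))
        = (c * c) * (q/2) * (- (1 / (v * u)) - v/u) * (1/v - v)" by (simp add: algebra_simps)
    also have "\<dots> = (- (1 / (v * u)) - v/u) * (1/v - v)" using cc q by simp
    also have "\<dots> = v * v / u - 1 / (v * v * u)" using v0 u unfolding u_def[symmetric]
      by (simp add: field_simps)
    finally show ?thesis .
  qed
  have "c * ((-q/2) * u powr (-q/2 - 1) * D - (q/2) * u powr (q/2 - 1) * D)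
        = u powr (q - 1) - u powr (-q - 1)"
    unfolding D_def u_def[symmetric] e1 e2 e3 e4 e5 using key by (simp add: v_def[symmetric])
  then show ?thesis using dd unfolding c_def u_def by simp
qed


theorem proposition4p2:
  fixes n :: nat and q u0 :: real
  assumes "n \<ge> 3"
    and "q = 2 * real n / (real n - 2)"
    and "u0 > 0"
  shows "\<exists>U U' :: real \<Rightarrow> real.
           (\<forall>x\<ge>0. U x > 0
              \<and> (U has_real_derivative U' x) (at x within {0..})
              \<and> (U' has_real_derivative (U x powr (q - 1) - U x powr (- q - 1))) (at x within {0..}))
         \<and> U 0 = u0
         \<and> (U \<longlongrightarrow> 1) at_top
         \<and> converges_rapidly U 1
         \<and> (\<forall>x\<ge>0. U' x = sqrt (2 / q) * (U x powr (- q / 2) - U x powr (q / 2)))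
         \<and> (U' \<longlongrightarrow> 0) at_top
         \<and> converges_rapidly U' 0"
proof -
  have n2: "real n - 2 > 0" using assms(1) by simp
  have q2: "q > 2" unfolding assms(2) using n2 by (simp add: field_simps)
  define c where "c = sqrt (2/q)"
  have c0: "c > 0" using q2 by (simp add: c_def)
  define G where "G = (\<lambda>u. sqrt (2/q) * (u powr (-q/2) - u powr (q/2)))"
  have main: "\<exists>U. U 0 = u0 \<and> (\<forall>x\<ge>0. U x > 0 \<and> (U has_real_derivative G (U x)) (at x))
     \<and> (\<exists>a C D. a > 0 \<and> (\<forall>x\<ge>0. \<bar>U x - 1\<bar> \<le> C * exp (-a*x) \<and> \<bar>G (U x)\<bar> \<le> D * exp (-a*x)))"
  proof (cases u0 "1::real" rule: linorder_cases)
    case equal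
    show ?thesis
      by (intro exI[of _ "\<lambda>_. 1"] conjI allI impI exI[of _ "1::real"] exI[of _ "0::real"])
         (auto simp: G_def equal)
  next
    case greater
    define h where "h = (\<lambda>y. c * ((1+y) powr (q/2) - (1+y) powr (-q/2)))"
    define a where "a = c*q/u0 powr (q/2)"
    define b where "b = c*q*u0 powr (q-1)"
    have a0: "a > 0" using c0 q2 greater by (simp add: a_def)
    have hc: "continuous_on {0<..<u0} h" unfolding h_def by (auto intro!: continuous_intros)
    have hpos: "h y > 0" if "0 < y" "y < u0" for y
    proof -
      have "c*q/(1+y) powr (q/2) * y \<le> h y"
        using boundA[of q c "1+y" y] q2 c0 that unfolding h_def by auto
      moreover have "c*q/(1+y) powr (q/2) * y > 0" using c0 q2 that by simp
      ultimately show ?thesis by linarith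
    qed
    have bnd: "a*y \<le> h y \<and> h y \<le> b*y" if "0 < y" "y \<le> u0 - 1" for y
      using boundA[of q c u0 y] q2 c0 greater that unfolding h_def a_def b_def by auto
    obtain Y where Y0: "Y 0 = u0 - 1" and
      Y: "\<And>x. x \<ge> 0 \<Longrightarrow> 0 < Y x \<and> Y x \<le> u0 - 1 \<and> (Y has_real_derivative - h (Y x)) (at x)
            \<and> Y x \<le> (u0 - 1) * exp (-a*x)"
      using core[of "u0 - 1" u0 h a b, OF _ _ hc hpos a0 bnd] greater by auto
    have GY: "G (1 + Y x) = - h (Y x)" for x
      unfolding G_def h_def c_def by (simp add: algebra_simps)
    have deriv: "\<forall>x\<ge>0. 0 < 1 + Y x \<and> ((\<lambda>x. 1 + Y x) has_real_derivative G (1 + Y x)) (at x)"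
    proof (intro allI impI conjI)
      fix x :: real assume x: "0 \<le> x"
      note Yx = Y[OF x]
      show "0 < 1 + Y x" using Yx by simp
      have "((\<lambda>x. 1 + Y x) has_real_derivative - h (Y x)) (at x)"
        using Yx by (auto intro!: derivative_eq_intros)
      then show "((\<lambda>x. 1 + Y x) has_real_derivative G (1 + Y x)) (at x)" by (simp add: GY)
    qed
    have bounds: "\<forall>x\<ge>0. \<bar>1 + Y x - 1\<bar> \<le> (u0 - 1) * exp (-a*x) \<and> \<bar>G (1 + Y x)\<bar> \<le> b * (u0 - 1) * exp (-a*x)"
    proof (intro allI impI conjI)
      fix x :: real assume x: "0 \<le> x"
      note Yx = Y[OF x]
      show "\<bar>1 + Y x - 1\<bar> \<le> (u0 - 1) * exp (-a*x)" using Yx by simp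
      have "h (Y x) \<le> b * Y x" using bnd[of "Y x"] Yx by auto
      also have "\<dots> \<le> b * ((u0 - 1) * exp (-a*x))"
        using Yx a0 greater c0 q2 by (intro mult_left_mono) (auto simp: b_def)
      finally have "h (Y x) \<le> b * (u0 - 1) * exp (-a*x)" by simp
      moreover have "h (Y x) > 0" using hpos[of "Y x"] Yx greater by auto
      ultimately show "\<bar>G (1 + Y x)\<bar> \<le> b * (u0 - 1) * exp (-a*x)" by (simp add: GY)
    qed
    show ?thesis
    proof (rule exI[of _ "\<lambda>x. 1 + Y x"], intro conjI)
      show "1 + Y 0 = u0" using Y0 by simp
      show "\<forall>x\<ge>0. 0 < 1 + Y x \<and> ((\<lambda>x. 1 + Y x) has_real_derivative G (1 + Y x)) (at x)" by (rule deriv)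
      show "\<exists>a C D. a > 0 \<and> (\<forall>x\<ge>0. \<bar>1 + Y x - 1\<bar> \<le> C * exp (-a*x) \<and> \<bar>G (1 + Y x)\<bar> \<le> D * exp (-a*x))"
        using bounds a0 by blast
    qed
  next
    case less
    define h where "h = (\<lambda>y. c * ((1-y) powr (-q/2) - (1-y) powr (q/2)))"
    define a where "a = c*q*u0 powr (q-1)"
    define b where "b = c*q/u0 powr (q/2)"
    have a0: "a > 0" using c0 q2 assms(3) by (simp add: a_def)
    have hc: "continuous_on {0<..<1} h" unfolding h_def by (auto intro!: continuous_intros)
    have hpos: "h y > 0" if "0 < y" "y < 1" for y
    proof -
      have "c*q*(1-y) powr (q-1) * y \<le> h y"
        using boundB[of q c "1-y" y] q2 c0 that unfolding h_def by auto
      moreover have "c*q*(1-y) powr (q-1) * y > 0" using c0 q2 that by simp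
      ultimately show ?thesis by linarith
    qed
    have bnd: "a*y \<le> h y \<and> h y \<le> b*y" if "0 < y" "y \<le> 1 - u0" for y
      using boundB[of q c u0 y] q2 c0 less assms(3) that unfolding h_def a_def b_def by auto
    obtain Y where Y0: "Y 0 = 1 - u0" and
      Y: "\<And>x. x \<ge> 0 \<Longrightarrow> 0 < Y x \<and> Y x \<le> 1 - u0 \<and> (Y has_real_derivative - h (Y x)) (at x)
            \<and> Y x \<le> (1 - u0) * exp (-a*x)"
      using core[of "1 - u0" 1 h a b, OF _ _ hc hpos a0 bnd] less assms(3) by auto
    have GY: "G (1 - Y x) = h (Y x)" for x
      unfolding G_def h_def c_def by (simp add: algebra_simps)
    have deriv: "\<forall>x\<ge>0. 0 < 1 - Y x \<and> ((\<lambda>x. 1 - Y x) has_real_derivative G (1 - Y x)) (at x)"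
    proof (intro allI impI conjI)
      fix x :: real assume x: "0 \<le> x"
      note Yx = Y[OF x]
      show "0 < 1 - Y x" using Yx assms(3) by simp
      have "((\<lambda>x. 1 - Y x) has_real_derivative - (- h (Y x))) (at x)"
        using Yx by (auto intro!: derivative_eq_intros)
      then show "((\<lambda>x. 1 - Y x) has_real_derivative G (1 - Y x)) (at x)" by (simp add: GY)
    qed
    have bounds: "\<forall>x\<ge>0. \<bar>1 - Y x - 1\<bar> \<le> (1 - u0) * exp (-a*x) \<and> \<bar>G (1 - Y x)\<bar> \<le> b * (1 - u0) * exp (-a*x)"
    proof (intro allI impI conjI)
      fix x :: real assume x: "0 \<le> x"
      note Yx = Y[OF x]
      show "\<bar>1 - Y x - 1\<bar> \<le> (1 - u0) * exp (-a*x)" using Yx by simp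
      have "h (Y x) \<le> b * Y x" using bnd[of "Y x"] Yx by auto
      also have "\<dots> \<le> b * ((1 - u0) * exp (-a*x))"
        using Yx a0 less c0 q2 assms(3) by (intro mult_left_mono) (auto simp: b_def)
      finally have "h (Y x) \<le> b * (1 - u0) * exp (-a*x)" by simp
      moreover have "h (Y x) > 0" using hpos[of "Y x"] Yx less assms(3) by auto
      ultimately show "\<bar>G (1 - Y x)\<bar> \<le> b * (1 - u0) * exp (-a*x)" by (simp add: GY)
    qed
    show ?thesis
    proof (rule exI[of _ "\<lambda>x. 1 - Y x"], intro conjI)
      show "1 - Y 0 = u0" using Y0 by simp
      show "\<forall>x\<ge>0. 0 < 1 - Y x \<and> ((\<lambda>x. 1 - Y x) has_real_derivative G (1 - Y x)) (at x)" by (rule deriv)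
      show "\<exists>a C D. a > 0 \<and> (\<forall>x\<ge>0. \<bar>1 - Y x - 1\<bar> \<le> C * exp (-a*x) \<and> \<bar>G (1 - Y x)\<bar> \<le> D * exp (-a*x))"
        using bounds a0 by blast
    qed
  qed
  then obtain U a C D where U0: "U 0 = u0"
    and U: "\<And>x. x \<ge> 0 \<Longrightarrow> U x > 0 \<and> (U has_real_derivative G (U x)) (at x)"
    and a: "a > 0"
    and est: "\<And>x. x \<ge> 0 \<Longrightarrow> \<bar>U x - 1\<bar> \<le> C * exp (-a*x) \<and> \<bar>G (U x)\<bar> \<le> D * exp (-a*x)"
    by blast
  have r1: "converges_rapidly U 1" by (rule rapid_of_exp[OF a]) (use est in blast)
  have r2: "converges_rapidly (\<lambda>x. G (U x)) 0" by (rule rapid_of_exp[OF a]) (use est in auto)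
  show ?thesis
  proof (rule exI[of _ U], rule exI[of _ "\<lambda>x. G (U x)"], intro conjI allI impI)
    fix x :: real assume x: "0 \<le> x"
    show "U x > 0" using U[OF x] by simp
    show "(U has_real_derivative G (U x)) (at x within {0..})"
      using U[OF x] by (auto intro: has_field_derivative_at_within)
    have "((\<lambda>x. G (U x)) has_real_derivative (U x powr (q - 1) - U x powr (- q - 1))) (at x)"
      unfolding G_def by (rule second) (use q2 U[OF x] in \<open>auto simp: G_def\<close>)
    then show "((\<lambda>x. G (U x)) has_real_derivative (U x powr (q - 1) - U x powr (- q - 1))) (at x within {0..})"
      by (rule has_field_derivative_at_within)
    show "G (U x) = sqrt (2 / q) * (U x powr (- q / 2) - U x powr (q / 2))" by (simp add: G_def)
  next
    show "U 0 = u0" by (rule U0)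
    show "converges_rapidly U 1" by (rule r1)
    show "(U \<longlongrightarrow> 1) at_top" by (rule rapid_lim[OF r1])
    show "converges_rapidly (\<lambda>x. G (U x)) 0" by (rule r2)
    show "((\<lambda>x. G (U x)) \<longlongrightarrow> 0) at_top" by (rule rapid_lim[OF r2])
  qed
qed

end
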